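(* Let $X,Y,Z$ be random variables on finite alphabets $\mathcal{X},\mathcal{Y},\mathcal{Z}$. For each $y\in\mathcal{Y}$ with $\Pr(Y=y)>0$, let $(A_y,B_y,C_y)$ be the random triple on $\mathcal{X}\times\mathcal{Y}\times\mathcal{Z}$ with $\Pr(A_y=x,B_y=y',C_y=z)=0$ if $\Pr(Z=z)=0$ and $=\Pr(X=x,Y=y',Z=z)\Pr(Z=z\mid Y=y)/\Pr(Z=z)$ otherwise; and for each $x\in\mathcal{X}$ with $\Pr(X=x)>0$, let $(A_x,B_x,C_x)$ be the random triple on $\mathcal{X}\times\mathcal{Y}\times\mathcal{Z}$ with $\Pr(A_x=x',B_x=y,C_x=z)=0$ if $\Pr(Z=z)=0$ and $=\Pr(X=x',Y=y,Z=z)\Pr(Z=z\mid X=x)/\Pr(Z=z)$ otherwise. Let $(A_{Z|Y},Y)$ be the pair on $\mathcal{X}\times\mathcal{Y}$ with $\Pr(A_{Z|Y}=x,Y=y)=\Pr(Y=y)\Pr(A_y=x)$ (and $0$ if $\Pr(Y=y)=0$), and let $(X,B_{Z|X})$ be the pair on $\mathcal{X}\times\mathcal{Y}$ with $\Pr(X=x,B_{Z|X}=y)=\Pr(X=x)\Pr(B_x=y)$ (and $0$ if $\Pr(X=x)=0$). Then $I(A_{Z|Y};Y)=I(X;B_{Z|X})$.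
   Context: $I$ denotes mutual information. *)

theory Defs
  imports "HOL-Probability.Probability"
begin

text \<open>The random variables X, Y, Z on finite alphabets 'a, 'b, 'c are given by their
joint distribution P on 'a \<times> 'b \<times> 'c (X = first, Y = second, Z = third component).\<close>

definition pXYZ :: "('a \<times> 'b \<times> 'c) pmf \<Rightarrow> 'a \<Rightarrow> 'b \<Rightarrow> 'c \<Rightarrow> real" where
  "pXYZ P x y z = pmf P (x, y, z)"

definition pX :: "('a \<times> 'b \<times> 'c) pmf \<Rightarrow> 'a \<Rightarrow> real" where
  "pX P x = measure_pmf.prob P {w. fst w = x}"

definition pY :: "('a \<times> 'b \<times> 'c) pmf \<Rightarrow> 'b \<Rightarrow> real" where
  "pY P y = measure_pmf.prob P {w. fst (snd w) = y}"

definition pZ :: "('a \<times> 'b \<times> 'c) pmf \<Rightarrow> 'c \<Rightarrow> real" where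
  "pZ P z = measure_pmf.prob P {w. snd (snd w) = z}"

definition pZ_given_Y :: "('a \<times> 'b \<times> 'c) pmf \<Rightarrow> 'c \<Rightarrow> 'b \<Rightarrow> real" where
  "pZ_given_Y P z y = measure_pmf.prob P {w. fst (snd w) = y \<and> snd (snd w) = z} / pY P y"

definition pZ_given_X :: "('a \<times> 'b \<times> 'c) pmf \<Rightarrow> 'c \<Rightarrow> 'a \<Rightarrow> real" where
  "pZ_given_X P z x = measure_pmf.prob P {w. fst w = x \<and> snd (snd w) = z} / pX P x"

text \<open>The triple (A_y, B_y, C_y) (meaningful for Pr(Y = y) > 0).\<close>
definition triple_Y :: "('a \<times> 'b \<times> 'c) pmf \<Rightarrow> 'b \<Rightarrow> ('a \<times> 'b \<times> 'c) pmf" where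
  "triple_Y P y = embed_pmf (\<lambda>(x, y', z).
     if pZ P z = 0 then 0 else pXYZ P x y' z * pZ_given_Y P z y / pZ P z)"

text \<open>The triple (A_x, B_x, C_x) (meaningful for Pr(X = x) > 0).\<close>
definition triple_X :: "('a \<times> 'b \<times> 'c) pmf \<Rightarrow> 'a \<Rightarrow> ('a \<times> 'b \<times> 'c) pmf" where
  "triple_X P x = embed_pmf (\<lambda>(x', y, z).
     if pZ P z = 0 then 0 else pXYZ P x' y z * pZ_given_X P z x / pZ P z)"

definition pair_AZY :: "('a \<times> 'b \<times> 'c) pmf \<Rightarrow> ('a \<times> 'b) pmf" where
  "pair_AZY P = embed_pmf (\<lambda>(x, y).
     if pY P y = 0 then 0 else pY P y * measure_pmf.prob (triple_Y P y) {t. fst t = x})"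

definition pair_XBZX :: "('a \<times> 'b \<times> 'c) pmf \<Rightarrow> ('a \<times> 'b) pmf" where
  "pair_XBZX P = embed_pmf (\<lambda>(x, y).
     if pX P x = 0 then 0 else pX P x * measure_pmf.prob (triple_X P x) {t. fst (snd t) = y})"

definition MI :: "('a \<times> 'b) pmf \<Rightarrow> real" where
  "MI q = prob_space.mutual_information (measure_pmf q) 2
            (count_space UNIV) (count_space UNIV) fst snd"

end

theory Submission
  imports Defs
begin

lemma sum_triple:
  "(\<Sum>w\<in>(UNIV::('a::finite\<times>'b::finite\<times>'c::finite) set). g w) = (\<Sum>x\<in>UNIV. \<Sum>y\<in>UNIV. \<Sum>z\<in>UNIV. g (x,y,z))"
  by (simp add: UNIV_Times_UNIV[symmetric] sum.cartesian_product del: UNIV_Times_UNIV)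

lemma prob_triple:
  fixes P :: "('a::finite \<times> 'b::finite \<times> 'c::finite) pmf"
  shows "measure_pmf.prob P A = (\<Sum>x\<in>UNIV. \<Sum>y\<in>UNIV. \<Sum>z\<in>UNIV. if (x,y,z) \<in> A then pmf P (x,y,z) else 0)"
proof -
  have "measure_pmf.prob P A = sum (pmf P) A" by (simp add: measure_measure_pmf_finite)
  also have "\<dots> = (\<Sum>w\<in>UNIV. if w \<in> A then pmf P w else 0)"
    by (simp add: sum.If_cases)
  finally show ?thesis by (simp add: sum_triple)
qed

lemma sum_if_out[simp]: "(\<Sum>z\<in>A. if c then f z else 0) = (if c then sum f A else 0)"
  by simp

lemma if_conj_0: "(if a \<and> b then (x::real) else 0) = (if a then if b then x else 0 else 0)"
  by simp

lemma pmf_embed_finite: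
  fixes f :: "'a::finite \<Rightarrow> real"
  assumes "\<And>x. 0 \<le> f x" "sum f UNIV = 1"
  shows "pmf (embed_pmf f) x = f x"
proof (rule pmf_embed_pmf)
  show "\<And>x. 0 \<le> f x" by fact
  have "(\<integral>\<^sup>+x. ennreal (f x) \<partial>count_space UNIV) = (\<Sum>a\<in>UNIV. ennreal (f a))"
    by (simp add: nn_integral_count_space_finite)
  also have "\<dots> = ennreal (sum f UNIV)" using assms(1) by (simp add: sum_ennreal)
  finally show "(\<integral>\<^sup>+x. ennreal (f x) \<partial>count_space UNIV) = 1" using assms(2) by simp
qed

context
  fixes P :: "('a::finite \<times> 'b::finite \<times> 'c::finite) pmf"
begin

abbreviation "q \<equiv> pmf P"
definition "pyz y z = (\<Sum>x\<in>UNIV. q (x,y,z))"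
definition "pxz x z = (\<Sum>y\<in>UNIV. q (x,y,z))"

lemma pY_eq: "pY P y = (\<Sum>z\<in>UNIV. pyz y z)"
  unfolding pY_def pyz_def by (simp add: prob_triple if_conj_0) (rule sum.swap)

lemma pX_eq: "pX P x = (\<Sum>z\<in>UNIV. pxz x z)"
  unfolding pX_def pxz_def by (simp add: prob_triple if_conj_0) (rule sum.swap)

lemma pZ_eq: "pZ P z = (\<Sum>x\<in>UNIV. \<Sum>y\<in>UNIV. q (x,y,z))"
  unfolding pZ_def by (simp add: prob_triple if_conj_0)

lemma pZY_eq: "pZ_given_Y P z y = pyz y z / pY P y"
  unfolding pZ_given_Y_def pyz_def by (simp add: prob_triple if_conj_0)

lemma pZX_eq: "pZ_given_X P z x = pxz x z / pX P x"
  unfolding pZ_given_X_def pxz_def by (simp add: prob_triple if_conj_0)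

lemma pZ0: "pZ P z = 0 \<Longrightarrow> q (x,y,z) = 0"
  unfolding pZ_eq by (simp add: sum_nonneg sum_nonneg_eq_0_iff)

end

lemma swap3: "(\<Sum>x\<in>A. \<Sum>y\<in>B. \<Sum>z\<in>C. F x y z) = (\<Sum>z\<in>C. \<Sum>x\<in>A. \<Sum>y\<in>B. F x y z)"
proof -
  have "(\<Sum>x\<in>A. \<Sum>y\<in>B. \<Sum>z\<in>C. F x y z) = (\<Sum>x\<in>A. \<Sum>z\<in>C. \<Sum>y\<in>B. F x y z)"
    by (rule sum.cong[OF refl], rule sum.swap)
  also have "\<dots> = (\<Sum>z\<in>C. \<Sum>x\<in>A. \<Sum>y\<in>B. F x y z)" by (rule sum.swap)
  finally show ?thesis .
qed

context
  fixes P :: "('a::finite \<times> 'b::finite \<times> 'c::finite) pmf"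
begin

lemma pY_nonneg: "0 \<le> pY P y" unfolding pY_def by simp
lemma pX_nonneg: "0 \<le> pX P y" unfolding pX_def by simp
lemma pZ_nonneg: "0 \<le> pZ P y" unfolding pZ_def by simp
lemma pyz_nonneg: "0 \<le> pyz P y z" unfolding pyz_def by (simp add: sum_nonneg)
lemma pxz_nonneg: "0 \<le> pxz P y z" unfolding pxz_def by (simp add: sum_nonneg)

lemma pyz0: "pZ P z = 0 \<Longrightarrow> pyz P y z = 0" unfolding pyz_def by (simp add: pZ0)
lemma pxz0: "pZ P z = 0 \<Longrightarrow> pxz P y z = 0" unfolding pxz_def by (simp add: pZ0)

lemma pY0: "pY P y = 0 \<Longrightarrow> pyz P y z = 0"
  unfolding pY_eq using pyz_nonneg by (simp add: sum_nonneg_eq_0_iff)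
lemma pX0: "pX P x = 0 \<Longrightarrow> pxz P x z = 0"
  unfolding pX_eq using pxz_nonneg by (simp add: sum_nonneg_eq_0_iff)

definition "gg x y = (\<Sum>z\<in>UNIV. if pZ P z = 0 then 0 else pxz P x z * pyz P y z / pZ P z)"

lemma triple_Y_pmf:
  assumes "pY P y \<noteq> 0"
  shows "pmf (triple_Y P y) (x, y', z) =
    (if pZ P z = 0 then 0 else pyz P y z / (pY P y * pZ P z)) * q P (x,y',z)"
proof -
  define h where "h z = (if pZ P z = 0 then 0 else pyz P y z / (pY P y * pZ P z))" for z
  define f where "f = (\<lambda>(x, y', z).
     if pZ P z = 0 then 0 else pXYZ P x y' z * pZ_given_Y P z y / pZ P z)"
  have f: "f (x,y',z) = h z * q P (x,y',z)" for x y' z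
    unfolding f_def h_def by (simp add: pXYZ_def pZY_eq)
  have "(\<Sum>t\<in>UNIV. f t) = (\<Sum>x\<in>UNIV. \<Sum>y'\<in>UNIV. \<Sum>z\<in>UNIV. h z * q P (x,y',z))"
    by (simp add: sum_triple f)
  also have "\<dots> = (\<Sum>z\<in>UNIV. \<Sum>x\<in>UNIV. \<Sum>y'\<in>UNIV. h z * q P (x,y',z))" by (rule swap3)
  also have "\<dots> = (\<Sum>z\<in>UNIV. h z * pZ P z)" by (simp add: sum_distrib_left pZ_eq)
  also have "\<dots> = (\<Sum>z\<in>UNIV. pyz P y z / pY P y)"
    by (rule sum.cong) (use assms in \<open>auto simp: h_def pyz0\<close>)
  also have "\<dots> = 1" using assms by (simp add: sum_divide_distrib[symmetric] pY_eq[symmetric])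
  finally have s: "sum f UNIV = 1" .
  have n: "0 \<le> f t" for t
    using pyz_nonneg pY_nonneg pZ_nonneg
    by (cases t) (auto simp: f h_def)
  have "pmf (triple_Y P y) (x, y', z) = f (x,y',z)"
    unfolding triple_Y_def f_def[symmetric] by (rule pmf_embed_finite[OF n s])
  then show ?thesis by (simp add: f h_def)
qed

lemma triple_X_pmf:
  assumes "pX P x \<noteq> 0"
  shows "pmf (triple_X P x) (x', y, z) =
    (if pZ P z = 0 then 0 else pxz P x z / (pX P x * pZ P z)) * q P (x',y,z)"
proof -
  define h where "h z = (if pZ P z = 0 then 0 else pxz P x z / (pX P x * pZ P z))" for z
  define f where "f = (\<lambda>(x', y, z).
     if pZ P z = 0 then 0 else pXYZ P x' y z * pZ_given_X P z x / pZ P z)"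
  have f: "f (x',y,z) = h z * q P (x',y,z)" for x' y z
    unfolding f_def h_def by (simp add: pXYZ_def pZX_eq)
  have "(\<Sum>t\<in>UNIV. f t) = (\<Sum>x\<in>UNIV. \<Sum>y'\<in>UNIV. \<Sum>z\<in>UNIV. h z * q P (x,y',z))"
    by (simp add: sum_triple f)
  also have "\<dots> = (\<Sum>z\<in>UNIV. \<Sum>x\<in>UNIV. \<Sum>y'\<in>UNIV. h z * q P (x,y',z))" by (rule swap3)
  also have "\<dots> = (\<Sum>z\<in>UNIV. h z * pZ P z)" by (simp add: sum_distrib_left pZ_eq)
  also have "\<dots> = (\<Sum>z\<in>UNIV. pxz P x z / pX P x)"
    by (rule sum.cong) (use assms in \<open>auto simp: h_def pxz0\<close>)
  also have "\<dots> = 1" using assms by (simp add: sum_divide_distrib[symmetric] pX_eq[symmetric])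
  finally have s: "sum f UNIV = 1" .
  have n: "0 \<le> f t" for t
    using pxz_nonneg pX_nonneg pZ_nonneg
    by (cases t) (auto simp: f h_def)
  have "pmf (triple_X P x) (x', y, z) = f (x',y,z)"
    unfolding triple_X_def f_def[symmetric] by (rule pmf_embed_finite[OF n s])
  then show ?thesis by (simp add: f h_def)
qed

lemma AZY_fun:
  "(if pY P y = 0 then 0 else pY P y * measure_pmf.prob (triple_Y P y) {t. fst t = x}) = gg x y"
proof (cases "pY P y = 0")
  case True
  have "gg x y = 0" unfolding gg_def using pY0[OF True] by (intro sum.neutral ballI) simp
  with True show ?thesis by simp
next
  case False
  have "measure_pmf.prob (triple_Y P y) {t. fst t = x} =
     (\<Sum>y'\<in>UNIV. \<Sum>z\<in>UNIV. (if pZ P z = 0 then 0 else pyz P y z / (pY P y * pZ P z)) * q P (x,y',z))"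
    by (simp add: prob_triple triple_Y_pmf[OF False])
  also have "\<dots> = (\<Sum>z\<in>UNIV. (if pZ P z = 0 then 0 else pyz P y z / (pY P y * pZ P z)) * pxz P x z)"
    by (subst sum.swap) (simp add: pxz_def sum_distrib_left)
  finally show ?thesis using False
    by (simp add: gg_def sum_distrib_left) (rule sum.cong, auto)
qed

lemma XBZX_fun:
  "(if pX P x = 0 then 0 else pX P x * measure_pmf.prob (triple_X P x) {t. fst (snd t) = y}) = gg x y"
proof (cases "pX P x = 0")
  case True
  have "gg x y = 0" unfolding gg_def using pX0[OF True] by (intro sum.neutral ballI) simp
  with True show ?thesis by simp
next
  case False
  have "measure_pmf.prob (triple_X P x) {t. fst (snd t) = y} =
     (\<Sum>x'\<in>UNIV. \<Sum>z\<in>UNIV. (if pZ P z = 0 then 0 else pxz P x z / (pX P x * pZ P z)) * q P (x',y,z))"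
    by (simp add: prob_triple triple_X_pmf[OF False])
  also have "\<dots> = (\<Sum>z\<in>UNIV. (if pZ P z = 0 then 0 else pxz P x z / (pX P x * pZ P z)) * pyz P y z)"
    by (subst sum.swap) (simp add: pyz_def sum_distrib_left)
  finally show ?thesis using False
    by (simp add: gg_def sum_distrib_left) (rule sum.cong, auto)
qed

lemma pairs_eq: "pair_AZY P = pair_XBZX P"
  unfolding pair_AZY_def pair_XBZX_def AZY_fun XBZX_fun ..

end

theorem lemma7:
  fixes P :: "('a::finite \<times> 'b::finite \<times> 'c::finite) pmf"
  shows "MI (pair_AZY P) = MI (pair_XBZX P)"
  by (simp add: pairs_eq)

end
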